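(* Let $0<q<1$ and $\alpha,\gamma,z\in\mathbb{C}$. Then, as an identity of meromorphic functions in $z$, \[ \mathfrak{F}\!\left(\left\{\frac{q^{\frac12(\alpha+\gamma+k)-\frac34}\,(q^{\gamma-\alpha+k};q^2)_\infty\,\sqrt{z}}{(q^{\gamma-\alpha+k+1};q^2)_\infty\,\big(1-(1-z)q^{\gamma+k-1}\big)}\right\}_{k=1}^\infty\right) =\frac{(q^\gamma;q)_\infty}{((1-z)q^\gamma;q)_\infty}\,{}_1\phi_1(q^\alpha;q^\gamma;q,-q^\gamma z). \]
   Context: Complex powers of $q$ are $q^s=e^{s\log q}$. $(a;q)_\infty=\prod_{j\ge0}(1-aq^j)$, $(a;q)_k=\prod_{j=0}^{k-1}(1-aq^j)$, and ${}_1\phi_1(a;b;q,z)=\sum_{k\ge0}(-1)^kq^{k(k-1)/2}\frac{(a;q)_k}{(b;q)_k(q;q)_k}z^k$. For a complex sequence $x=\{x_k\}_{k=1}^{\infty}$ with $\sum_{k\ge1}|x_kx_{k+1}|<\infty$, \[ \mathfrak{F}(x)=1+\sum_{m=1}^\infty(-1)^m\sum_{k_1=1}^\infty\ \sum_{k_2=k_1+2}^\infty\cdots\sum_{k_m=k_{m-1}+2}^\infty x_{k_1}x_{k_1+1}\cdots x_{k_m}x_{k_m+1}. \] Since $\mathfrak{F}$ depends only on products $x_kx_{k+1}$, the branch of $\sqrt z$ is irrelevant. *)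

theory Defs
  imports "HOL-Analysis.Analysis"
begin

definition qpow :: "real \<Rightarrow> complex \<Rightarrow> complex" where
  "qpow q s = exp (s * complex_of_real (ln q))"

definition qpoch :: "complex \<Rightarrow> real \<Rightarrow> nat \<Rightarrow> complex" where
  "qpoch a q k = (\<Prod>j<k. 1 - a * complex_of_real q ^ j)"

definition qpoch_inf :: "complex \<Rightarrow> real \<Rightarrow> complex" where
  "qpoch_inf a q = (\<Prod>j. 1 - a * complex_of_real q ^ j)"

definition phi11 :: "complex \<Rightarrow> complex \<Rightarrow> real \<Rightarrow> complex \<Rightarrow> complex" where
  "phi11 a b q z = (\<Sum>k. (-1) ^ k * complex_of_real q ^ (k * (k - 1) div 2)
      * qpoch a q k / (qpoch b q k * qpoch (complex_of_real q) q k) * z ^ k)"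

definition gapped :: "nat \<Rightarrow> nat list set" where
  "gapped m = {ks. length ks = m \<and> (\<forall>i<m. 1 \<le> ks ! i)
                 \<and> (\<forall>i. i + 1 < m \<longrightarrow> ks ! i + 2 \<le> ks ! (i + 1))}"

definition frakF :: "(nat \<Rightarrow> complex) \<Rightarrow> complex" where
  "frakF x = 1 + (\<Sum>m. (-1) ^ Suc m *
      infsum (\<lambda>ks. \<Prod>i<Suc m. x (ks ! i) * x (ks ! i + 1)) (gapped (Suc m)))"

end

theory Submission
  imports Defs
begin

lemma gapped_mono_aux:
  assumes "ks \<in> gapped m" "i + d < m"
  shows "ks ! i + 2 * d \<le> ks ! (i + d)"
  using assms(2)
proof (induction d)
  case 0 then show ?case by simp
next
  case (Suc d)
  then have "ks ! i + 2 * d \<le> ks ! (i + d)" by simp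
  moreover have "ks ! (i+d) + 2 \<le> ks ! (i + d + 1)"
    using assms(1) Suc.prems unfolding gapped_def by auto
  ultimately show ?case by simp
qed

lemma gapped_mono:
  assumes "ks \<in> gapped m" "i < j" "j < m"
  shows "ks ! i < ks ! j"
  using gapped_mono_aux[OF assms(1), of i "j - i"] assms by simp

lemma gapped_len: "ks \<in> gapped m \<Longrightarrow> length ks = m"
  by (simp add: gapped_def)

lemma gapped_sorted:
  assumes "ks \<in> gapped m"
  shows "sorted_wrt (<) ks"
  using gapped_mono[OF assms] gapped_len[OF assms]
  by (auto simp: sorted_wrt_iff_nth_less)

lemma gapped_inj: "inj_on set (\<Union>m. gapped m)"
proof (rule inj_onI)
  fix xs ys assume "xs \<in> (\<Union>m. gapped m)" "ys \<in> (\<Union>m. gapped m)" "set xs = set ys"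
  then show "xs = ys"
    using gapped_sorted strict_sorted_iff sorted_distinct_set_unique by blast
qed

lemma prod_nth_set:
  assumes "distinct ks"
  shows "(\<Prod>i<length ks. f (ks ! i)) = (\<Prod>k\<in>set ks. f k)"
proof -
  have "set ks = (\<lambda>i. ks ! i) ` {..<length ks}"
    by (auto simp: set_conv_nth)
  moreover have "inj_on (\<lambda>i. ks ! i) {..<length ks}"
    using assms by (simp add: inj_on_def nth_eq_iff_index_eq)
  ultimately show ?thesis by (simp add: prod.reindex)
qed

lemma gapped_pos: "ks \<in> gapped m \<Longrightarrow> k \<in> set ks \<Longrightarrow> 1 \<le> k"
  by (auto simp: gapped_def in_set_conv_nth)

lemma sum_pow_bound:
  fixes a :: "nat \<Rightarrow> real"
  assumes "finite L" "L \<subseteq> (\<Union>m. gapped m)" "\<And>k. 0 \<le> a k" "summable a"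
  shows "(\<Sum>ks\<in>L. \<Prod>i<length ks. a (ks ! i)) \<le> exp (suminf a)"
proof -
  define N where "N = Max (insert 0 (\<Union>ks\<in>L. set ks))"
  have fin: "finite (insert 0 (\<Union>ks\<in>L. set ks))" using assms(1) by auto
  have sub: "set ` L \<subseteq> Pow {..N}"
    unfolding N_def using fin by (auto intro: Max_ge)
  have dist: "\<And>ks. ks \<in> L \<Longrightarrow> distinct ks"
    using assms(2) gapped_sorted strict_sorted_iff by blast
  have inj: "inj_on set L" using gapped_inj assms(2) inj_on_subset by blast
  have "(\<Sum>ks\<in>L. \<Prod>i<length ks. a (ks ! i)) = (\<Sum>ks\<in>L. \<Prod>k\<in>set ks. a k)"
    using dist prod_nth_set by (intro sum.cong) auto
  also have "\<dots> = (\<Sum>S\<in>set ` L. \<Prod>k\<in>S. a k)"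
    using inj by (simp add: sum.reindex)
  also have "\<dots> \<le> (\<Sum>S\<in>Pow {..N}. \<Prod>k\<in>S. a k)"
    using sub by (intro sum_mono2) (auto intro: prod_nonneg assms(3))
  also have "\<dots> = (\<Prod>k\<in>{..N}. a k + 1)"
    by (subst prod_add) auto
  also have "\<dots> \<le> (\<Prod>k\<in>{..N}. exp (a k))"
    using assms(3) by (intro prod_mono) (auto simp: add.commute exp_ge_add_one_self)
  also have "\<dots> = exp (\<Sum>k\<in>{..N}. a k)" by (simp add: exp_sum)
  also have "\<dots> \<le> exp (suminf a)"
    using assms by (simp add: sum_le_suminf)
  finally show ?thesis .
qed

definition Sm :: "(nat \<Rightarrow> complex) \<Rightarrow> nat \<Rightarrow> complex" where
  "Sm x m = infsum (\<lambda>ks. \<Prod>i<m. x (ks ! i) * x (ks ! i + 1)) (gapped m)"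

definition gn :: "(nat \<Rightarrow> complex) \<Rightarrow> nat list \<Rightarrow> real" where
  "gn x ks = (\<Prod>i<length ks. norm (x (ks ! i) * x (ks ! i + 1)))"

abbreviation okx :: "(nat \<Rightarrow> complex) \<Rightarrow> bool" where
  "okx x \<equiv> summable (\<lambda>k. norm (x k * x (k + 1)))"

abbreviation Tx :: "(nat \<Rightarrow> complex) \<Rightarrow> real" where
  "Tx x \<equiv> (\<Sum>k. norm (x k * x (k + 1)))"

lemma gn_nonneg: "0 \<le> gn x ks" by (simp add: gn_def prod_nonneg)

lemma gn_summable:
  assumes "okx x" "B \<subseteq> (\<Union>m. gapped m)"
  shows "gn x summable_on B"
proof (rule nonneg_bdd_above_summable_on)
  show "bdd_above (sum (gn x) ` {F. F \<subseteq> B \<and> finite F})"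
    unfolding bdd_above_def
    using sum_pow_bound[of _ "\<lambda>k. norm (x k * x (k + 1))"] assms
    by (intro exI[of _ "exp (Tx x)"]) (auto simp: gn_def)
qed (simp add: gn_nonneg)

lemma gn_infsum_le:
  assumes "okx x" "B \<subseteq> (\<Union>m. gapped m)"
  shows "infsum (gn x) B \<le> exp (Tx x)"
  using gn_summable[OF assms] 
  by (rule infsum_le_finite_sums)
     (use sum_pow_bound[of _ "\<lambda>k. norm (x k * x (k + 1))"] assms in \<open>auto simp: gn_def\<close>)

lemma Sm_summable:
  assumes "okx x"
  shows "(\<lambda>ks. \<Prod>i<m. x (ks ! i) * x (ks ! i + 1)) summable_on gapped m"
proof (rule abs_summable_summable)
  have "(\<lambda>ks. norm (\<Prod>i<m. x (ks ! i) * x (ks ! i + 1))) summable_on gapped m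
        \<longleftrightarrow> gn x summable_on gapped m"
    by (intro summable_on_cong) (auto simp: gn_def gapped_len prod_norm)
  then show "(\<lambda>ks. norm (\<Prod>i<m. x (ks ! i) * x (ks ! i + 1))) summable_on gapped m"
    using gn_summable[OF assms, of "gapped m"] by auto
qed

lemma Sm_norm_le:
  assumes "okx x"
  shows "norm (Sm x m) \<le> infsum (gn x) (gapped m)"
proof -
  have eq: "infsum (\<lambda>ks. norm (\<Prod>i<m. x (ks ! i) * x (ks ! i + 1))) (gapped m)
        = infsum (gn x) (gapped m)"
    by (intro infsum_cong) (auto simp: gn_def gapped_len prod_norm)
  have "(\<lambda>ks. norm (\<Prod>i<m. x (ks ! i) * x (ks ! i + 1))) summable_on gapped m"
    by (subst summable_on_cong[of _ _ "gn x"])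
       (auto simp: gn_def gapped_len prod_norm intro: gn_summable[OF assms])
  then show ?thesis unfolding Sm_def eq[symmetric]
    by (intro norm_infsum_bound) 
qed

lemma gapped_disj: "m \<noteq> m' \<Longrightarrow> gapped m \<inter> gapped m' = {}"
  by (auto simp: gapped_def)

lemma sum_infsum_gn:
  assumes "okx x"
  shows "(\<Sum>m<M. infsum (gn x) (gapped m)) = infsum (gn x) (\<Union>m<M. gapped m)"
proof (induction M)
  case 0 then show ?case by simp
next
  case (Suc M)
  have "(\<Union>m<Suc M. gapped m) = (\<Union>m<M. gapped m) \<union> gapped M"
    by (auto simp: lessThan_Suc)
  moreover have "(\<Union>m<M. gapped m) \<inter> gapped M = {}"
    using gapped_disj by (auto simp: gapped_def)
  moreover have "infsum (gn x) ((\<Union>m<M. gapped m) \<union> gapped M)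
     = infsum (gn x) (\<Union>m<M. gapped m) + infsum (gn x) (gapped M)"
    by (rule infsum_Un_disjoint) (auto intro!: gn_summable[OF assms] simp: calculation(2))
  ultimately show ?case using Suc by simp
qed

lemma Sm_partial_le:
  assumes "okx x"
  shows "(\<Sum>m<M. norm (Sm x m)) \<le> exp (Tx x)"
proof -
  have "(\<Sum>m<M. norm (Sm x m)) \<le> (\<Sum>m<M. infsum (gn x) (gapped m))"
    by (intro sum_mono Sm_norm_le assms)
  also have "\<dots> = infsum (gn x) (\<Union>m<M. gapped m)" by (rule sum_infsum_gn[OF assms])
  also have "\<dots> \<le> exp (Tx x)" by (intro gn_infsum_le assms) auto
  finally show ?thesis .
qed

lemma gapped0: "gapped 0 = {[]}" by (auto simp: gapped_def)

lemma Sm0: "Sm x 0 = 1" by (simp add: Sm_def gapped0)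

lemma Sm_summable_norm:
  assumes "okx x"
  shows "summable (\<lambda>m. norm (Sm x m))"
  by (rule summableI_nonneg_bounded[OF _ Sm_partial_le[OF assms]]) simp

lemma frakF_alt:
  "frakF x = 1 + (\<Sum>m. (-1) ^ Suc m * Sm x (Suc m))"
  by (simp add: frakF_def Sm_def)

lemma frakF_sub1_le:
  assumes "okx x"
  shows "norm (frakF x - 1) \<le> exp (Tx x) - 1"
proof -
  have s: "summable (\<lambda>m. norm (Sm x (Suc m)))"
    using Sm_summable_norm[OF assms] by (subst summable_Suc_iff)
  have "norm (frakF x - 1) = norm (\<Sum>m. (-1) ^ Suc m * Sm x (Suc m))"
    by (simp add: frakF_alt)
  also have "\<dots> \<le> (\<Sum>m. norm ((-1) ^ Suc m * Sm x (Suc m)))"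
    by (rule summable_norm) (simp add: norm_mult norm_power s)
  also have "\<dots> = (\<Sum>m. norm (Sm x (Suc m)))" by (simp add: norm_mult norm_power)
  also have "\<dots> \<le> exp (Tx x) - 1"
  proof (rule suminf_le_const[OF s])
    fix n
    have "(\<Sum>m<Suc n. norm (Sm x m)) = (\<Sum>m<n. norm (Sm x (Suc m))) + norm (Sm x 0)"
      by (subst sum.lessThan_Suc_shift) simp
    then show "(\<Sum>m<n. norm (Sm x (Suc m))) \<le> exp (Tx x) - 1"
      using Sm_partial_le[OF assms, of "Suc n"] by (simp add: Sm0)
  qed
  finally show ?thesis .
qed

definition f1 :: "nat list \<Rightarrow> nat list" where "f1 ks = 1 # map (\<lambda>k. k + 2) ks"

lemma f1_mem: "ks \<in> gapped m \<Longrightarrow> f1 ks \<in> gapped (Suc m)"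
  unfolding gapped_def f1_def
  by (auto simp: nth_Cons split: nat.split)

lemma mapSuc_mem: "ks \<in> gapped m \<Longrightarrow> map Suc ks \<in> gapped m"
  unfolding gapped_def by auto

lemma gapped_ge0:
  assumes "ks \<in> gapped m" "i < m"
  shows "ks ! 0 + 2 * i \<le> ks ! i"
  using gapped_mono_aux[OF assms(1), of 0 i] assms by simp

lemma gapped_split_cover:
  assumes "ks \<in> gapped (Suc m)"
  shows "ks \<in> f1 ` gapped m \<union> map Suc ` gapped (Suc m)"
proof -
  have len: "length ks = Suc m" using assms by (simp add: gapped_def)
  then obtain k rest where ks: "ks = k # rest" by (cases ks) auto
  have lenr: "length rest = m" using len ks by simp
  have k1: "1 \<le> k" using assms ks unfolding gapped_def by force
  have ge: "\<And>i. i < Suc m \<Longrightarrow> k + 2 * i \<le> ks ! i"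
    using gapped_ge0[OF assms] ks by simp
  have gap: "\<And>i. i + 1 < Suc m \<Longrightarrow> ks ! i + 2 \<le> ks ! (i + 1)"
    using assms unfolding gapped_def by blast
  show ?thesis
  proof (cases "k = 1")
    case True
    define r where "r = map (\<lambda>k. k - 2) rest"
    have restge: "\<And>i. i < m \<Longrightarrow> 3 \<le> rest ! i"
      using ge[of "Suc _"] True ks by fastforce
    have r2: "2 < rest ! i" if "i < m" for i using restge[OF that] by simp
    have rr: "rest ! i - 2 + 2 = rest ! i" if "i < m" for i using restge[OF that] by simp
    have "map (\<lambda>k. k + 2) r = rest"
      unfolding r_def using rr lenr by (intro nth_equalityI) auto
    then have "ks = f1 r" using ks True by (simp add: f1_def)
    moreover have "r \<in> gapped m"
      unfolding gapped_def r_def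
    proof (intro CollectI conjI allI impI)
      fix i assume "i + 1 < m"
      then have "rest ! i + 2 \<le> rest ! (i + 1)" using gap[of "Suc i"] ks by simp
      then show "map (\<lambda>k. k - 2) rest ! i + 2 \<le> map (\<lambda>k. k - 2) rest ! (i + 1)"
        using restge[of i] \<open>i + 1 < m\<close> lenr by simp
    qed (use rr lenr r2 in \<open>auto simp: Suc_le_eq\<close>)
    ultimately show ?thesis by blast
  next
    case False
    then have k2: "2 \<le> k" using k1 by simp
    define r where "r = map (\<lambda>k. k - 1) ks"
    have ksge: "\<And>i. i < Suc m \<Longrightarrow> 2 \<le> ks ! i" using ge k2 by fastforce
    have kk: "Suc (ks ! i - 1) = ks ! i" if "i < Suc m" for i using ksge[OF that] by simp
    have "map Suc r = ks"
      unfolding r_def using kk len by (intro nth_equalityI) auto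
    moreover have "r \<in> gapped (Suc m)"
      unfolding gapped_def r_def
    proof (intro CollectI conjI allI impI)
      fix i assume "i + 1 < Suc m"
      then show "map (\<lambda>k. k - 1) ks ! i + 2 \<le> map (\<lambda>k. k - 1) ks ! (i + 1)"
        using gap[of i] ksge[of i] len by simp
    qed (use len in \<open>auto simp: Suc_le_eq dest!: ksge\<close>)
    ultimately show ?thesis by blast
  qed
qed

lemma gapped_split:
  "gapped (Suc m) = f1 ` gapped m \<union> map Suc ` gapped (Suc m)"
  using gapped_split_cover f1_mem mapSuc_mem by blast

lemma gapped_split_disj:
  "f1 ` gapped m \<inter> map Suc ` gapped (Suc m) = {}"
proof -
  have "\<And>ks r. ks \<in> gapped (Suc m) \<Longrightarrow> f1 r \<noteq> map Suc ks"
    by (auto simp: f1_def gapped_def neq_Nil_conv)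
  then show ?thesis by blast
qed

lemma Sm_split:
  assumes "okx x"
  shows "Sm x (Suc m) = x 1 * x 2 * Sm (\<lambda>k. x (k + 2)) m + Sm (\<lambda>k. x (k + 1)) (Suc m)"
proof -
  let ?p = "\<lambda>m ks. \<Prod>i<m. x (ks ! i) * x (ks ! i + 1)"
  have sm: "?p (Suc m) summable_on gapped (Suc m)" by (rule Sm_summable[OF assms])
  have "Sm x (Suc m) = infsum (?p (Suc m)) (f1 ` gapped m) + infsum (?p (Suc m)) (map Suc ` gapped (Suc m))"
    unfolding Sm_def
    by (subst gapped_split, rule infsum_Un_disjoint[OF _ _ gapped_split_disj])
       (rule summable_on_subset_banach[OF sm]; use gapped_split in blast)+
  also have "infsum (?p (Suc m)) (f1 ` gapped m) = infsum (?p (Suc m) \<circ> f1) (gapped m)"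
    by (rule infsum_reindex) (auto simp: inj_on_def f1_def)
  also have "\<dots> = infsum (\<lambda>ks. x 1 * x 2 * (\<Prod>i<m. x (ks ! i + 2) * x (ks ! i + 1 + 2))) (gapped m)"
    unfolding comp_def f1_def prod.lessThan_Suc_shift
    by (intro infsum_cong) (auto simp: numeral_2_eq_2 gapped_len intro!: prod.cong)
  also have "\<dots> = x 1 * x 2 * Sm (\<lambda>k. x (k + 2)) m"
    unfolding Sm_def by (rule infsum_cmult_right') 
  also have "infsum (?p (Suc m)) (map Suc ` gapped (Suc m)) = infsum (?p (Suc m) \<circ> map Suc) (gapped (Suc m))"
    by (rule infsum_reindex) (auto simp: inj_on_def)
  also have "\<dots> = Sm (\<lambda>k. x (k + 1)) (Suc m)"
    unfolding Sm_def by (intro infsum_cong) (simp add: gapped_len)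
  finally show ?thesis .
qed

lemma okx_shift:
  assumes "okx x" shows "okx (\<lambda>k. x (k + n))"
  using summable_ignore_initial_segment[OF assms, of n] by (simp add: add.assoc add.commute[of 1])

lemma frakF_rec:
  assumes "okx x"
  shows "frakF x = frakF (\<lambda>k. x (k + 1)) - x 1 * x 2 * frakF (\<lambda>k. x (k + 2))"
proof -
  define x1 where "x1 = (\<lambda>k. x (k + 1))"
  define x2 where "x2 = (\<lambda>k. x (k + 2))"
  have o1: "okx x1" unfolding x1_def by (rule okx_shift[OF assms])
  have o2: "okx x2" unfolding x2_def by (rule okx_shift[OF assms])
  have sn: "summable (\<lambda>m. (-1) ^ m * Sm y m)" if "okx y" for y
    by (rule summable_norm_cancel) (simp add: norm_mult norm_power Sm_summable_norm[OF that])
  have s1: "summable (\<lambda>m. (-1) ^ Suc m * Sm x1 (Suc m))"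
    using sn[OF o1] by (subst summable_Suc_iff[where f="\<lambda>m. (-1) ^ m * Sm x1 m"])
  have s2: "summable (\<lambda>m. (-1) ^ m * Sm x2 m)" by (rule sn[OF o2])
  have F2: "frakF x2 = (\<Sum>m. (-1) ^ m * Sm x2 m)"
    using suminf_split_head[OF s2] by (simp add: frakF_alt Sm0)
  have "(\<Sum>m. (-1) ^ Suc m * Sm x (Suc m))
      = (\<Sum>m. - (x 1 * x 2) * ((-1) ^ m * Sm x2 m) + (-1) ^ Suc m * Sm x1 (Suc m))"
    using Sm_split[OF assms] unfolding x1_def x2_def by (simp add: algebra_simps)
  also have "\<dots> = (\<Sum>m. - (x 1 * x 2) * ((-1) ^ m * Sm x2 m)) + (\<Sum>m. (-1) ^ Suc m * Sm x1 (Suc m))"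
    by (rule suminf_add[OF summable_mult[OF s2] s1, symmetric])
  also have "(\<Sum>m. - (x 1 * x 2) * ((-1) ^ m * Sm x2 m)) = - (x 1 * x 2) * (\<Sum>m. (-1) ^ m * Sm x2 m)"
    by (rule suminf_mult[OF s2])
  finally have eq: "(\<Sum>m. (-1) ^ Suc m * Sm x (Suc m)) = - (x 1 * x 2) * (\<Sum>m. (-1) ^ m * Sm x2 m) + (\<Sum>m. (-1) ^ Suc m * Sm x1 (Suc m))" .
  show ?thesis
    unfolding x1_def[symmetric] x2_def[symmetric] frakF_alt[of x] frakF_alt[of x1] F2 eq by simp
qed

lemma frakF_tendsto:
  assumes "okx x"
  shows "(\<lambda>n. frakF (\<lambda>k. x (k + n))) \<longlonglongrightarrow> 1"
proof -
  define f where "f k = norm (x k * x (k + 1))" for k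
  have sf: "summable f" using assms unfolding f_def by simp
  have T: "Tx (\<lambda>k. x (k + n)) = (\<Sum>k. f (k + n))" for n
    by (simp add: f_def ac_simps)
  have "(\<lambda>n. (\<Sum>k. f (k + n))) \<longlonglongrightarrow> suminf f - suminf f"
    unfolding suminf_minus_initial_segment[OF sf]
    by (intro tendsto_diff tendsto_const summable_LIMSEQ sf)
  then have "(\<lambda>n. exp (\<Sum>k. f (k + n)) - 1) \<longlonglongrightarrow> exp 0 - 1"
    by (intro tendsto_diff tendsto_exp tendsto_const) simp
  then have t0: "(\<lambda>n. exp (Tx (\<lambda>k. x (k + n))) - 1) \<longlonglongrightarrow> 0" unfolding T by simp
  have "(\<lambda>n. frakF (\<lambda>k. x (k + n)) - 1) \<longlonglongrightarrow> 0"
    by (rule Lim_null_comparison[OF _ t0])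
       (intro always_eventually allI frakF_sub1_le okx_shift assms)
  then show ?thesis by (simp add: LIM_zero_iff)
qed

lemma qpoch_Suc1: "qpoch b r (Suc n) = qpoch b r n * (1 - b * of_real r ^ n)"
  by (simp add: qpoch_def)

lemma qpoch_Suc2: "qpoch b r (Suc n) = (1 - b) * qpoch (b * of_real r) r n"
  unfolding qpoch_def prod.lessThan_Suc_shift by (simp add: ac_simps)

lemma qI_conv:
  assumes "\<bar>r\<bar> < 1"
  shows "convergent_prod (\<lambda>j. 1 - a * complex_of_real r ^ j)"
proof -
  have "summable (\<lambda>i. norm a * \<bar>r\<bar> ^ i)"
    using assms by (intro summable_mult summable_geometric) simp
  then have "summable (\<lambda>i. norm ((1 - a * complex_of_real r ^ i) - 1))"
    by (simp add: norm_mult norm_power)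
  then show ?thesis
    by (intro abs_convergent_prod_imp_convergent_prod summable_imp_abs_convergent_prod)
qed

lemma qI_split:
  assumes "\<bar>r\<bar> < 1"
  shows "qpoch_inf a r = (1 - a) * qpoch_inf (a * of_real r) r"
proof -
  let ?f = "\<lambda>j. 1 - a * complex_of_real r ^ j"
  have e: "(\<lambda>n. ?f (Suc n)) = (\<lambda>j. 1 - (a * of_real r) * complex_of_real r ^ j)"
    by (auto simp: ac_simps)
  have "(\<lambda>n. ?f (Suc n)) has_prod qpoch_inf (a * of_real r) r"
    unfolding e qpoch_inf_def using qI_conv[OF assms] by (simp add: convergent_prod_has_prod)
  then have "?f has_prod (qpoch_inf (a * of_real r) r * ?f 0)" by (rule has_prod_Suc_imp)
  then show ?thesis unfolding qpoch_inf_def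
    by (metis (no_types, lifting) has_prod_unique mult.commute power_0 mult_1_right)
qed

lemma qI_bound:
  assumes "\<bar>r\<bar> < 1"
  shows "norm (qpoch_inf a r - 1) \<le> exp (norm a / (1 - \<bar>r\<bar>)) - 1"
proof -
  let ?f = "\<lambda>j. 1 - a * complex_of_real r ^ j"
  have lim: "(\<lambda>n. norm ((\<Prod>i\<le>n. ?f i) - 1)) \<longlonglongrightarrow> norm (qpoch_inf a r - 1)"
    unfolding qpoch_inf_def
    by (intro tendsto_norm tendsto_diff tendsto_const convergent_prod_LIMSEQ qI_conv assms)
  have gs: "(\<lambda>i. \<bar>r\<bar> ^ i) sums (1 / (1 - \<bar>r\<bar>))" using assms geometric_sums[of "\<bar>r\<bar>"] by simp
  have b: "norm ((\<Prod>i\<le>n. ?f i) - 1) \<le> exp (norm a / (1 - \<bar>r\<bar>)) - 1" for n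
  proof -
    have "norm ((\<Prod>i\<le>n. 1 + (- a * complex_of_real r ^ i)) - 1)
          \<le> (\<Prod>i\<le>n. 1 + norm (- a * complex_of_real r ^ i)) - 1"
      by (rule norm_prod_minus1_le_prod_minus1)
    also have "\<dots> \<le> (\<Prod>i\<le>n. exp (norm a * \<bar>r\<bar> ^ i)) - 1"
      by (intro diff_right_mono prod_mono) (auto simp: norm_mult norm_power add.commute exp_ge_add_one_self)
    also have "\<dots> = exp (norm a * (\<Sum>i\<le>n. \<bar>r\<bar> ^ i)) - 1"
      by (simp add: exp_sum sum_distrib_left)
    also have "\<dots> \<le> exp (norm a / (1 - \<bar>r\<bar>)) - 1"
    proof -
      have "(\<Sum>i\<le>n. \<bar>r\<bar> ^ i) \<le> 1 / (1 - \<bar>r\<bar>)"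
        using sum_le_suminf[OF sums_summable[OF gs], of "{..n}"] sums_unique[OF gs] by simp
      then have "norm a * (\<Sum>i\<le>n. \<bar>r\<bar> ^ i) \<le> norm a * (1 / (1 - \<bar>r\<bar>))"
        by (intro mult_left_mono) auto
      then show ?thesis by simp
    qed
    finally show ?thesis by (simp add: ac_simps)
  qed
  show ?thesis by (rule LIMSEQ_le_const2[OF lim]) (use b in auto)
qed

lemma qI_tendsto1:
  assumes "\<bar>r\<bar> < 1" "w \<longlonglongrightarrow> 0"
  shows "(\<lambda>n. qpoch_inf (w n) r) \<longlonglongrightarrow> 1"
proof -
  have "(\<lambda>n. exp (norm (w n) / (1 - \<bar>r\<bar>)) - 1) \<longlonglongrightarrow> exp (0 / (1 - \<bar>r\<bar>)) - 1"
    by (intro tendsto_intros assms) (use assms tendsto_norm_zero in auto)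
  then have t0: "(\<lambda>n. exp (norm (w n) / (1 - \<bar>r\<bar>)) - 1) \<longlonglongrightarrow> 0" by simp
  have "(\<lambda>n. qpoch_inf (w n) r - 1) \<longlonglongrightarrow> 0"
    by (rule Lim_null_comparison[OF _ t0]) (intro always_eventually allI qI_bound assms)
  then show ?thesis by (simp add: LIM_zero_iff)
qed

lemma rec_unique:
  fixes u v c :: "nat \<Rightarrow> complex"
  assumes ru: "\<And>n. u n = u (Suc n) - c n * u (Suc (Suc n))"
    and rv: "\<And>n. v n = v (Suc n) - c n * v (Suc (Suc n))"
    and c0: "c \<longlonglongrightarrow> 0" and u1: "u \<longlonglongrightarrow> 1" and v1: "v \<longlonglongrightarrow> 1"
  shows "u n = v n"
proof -
  define W where "W n = u n * v (Suc n) - u (Suc n) * v n" for n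
  have Wrec: "W n = c n * W (Suc n)" for n
    unfolding W_def by (subst ru, subst rv) (simp add: algebra_simps)
  obtain M where M: "\<And>n. norm (u n) \<le> M" "\<And>n. norm (v n) \<le> M"
  proof -
    obtain M1 where "\<And>n. norm (u n) \<le> M1"
      using convergent_imp_Bseq[of u] u1 convergentI unfolding Bseq_def by (metis convergentI)
    moreover obtain M2 where "\<And>n. norm (v n) \<le> M2"
      using convergent_imp_Bseq[of v] v1 convergentI unfolding Bseq_def by (metis convergentI)
    ultimately show ?thesis using that[of "max M1 M2"] by (meson max.cobounded1 max.cobounded2 order_trans)
  qed
  have Wb: "norm (W n) \<le> 2 * M * M" for n
  proof -
    have "norm (W n) \<le> norm (u n) * norm (v (Suc n)) + norm (u (Suc n)) * norm (v n)"
      unfolding W_def by (metis norm_mult norm_triangle_ineq4)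
    also have "\<dots> \<le> M * M + M * M"
      using M by (intro add_mono mult_mono) (auto intro: order_trans[OF norm_ge_zero])
    finally show ?thesis by simp
  qed
  obtain N where N: "\<And>n. n \<ge> N \<Longrightarrow> norm (c n) \<le> 1/2"
  proof -
    obtain N where "\<forall>n\<ge>N. dist (c n) 0 < 1/2"
      using c0 unfolding LIMSEQ_def by (meson half_gt_zero_iff zero_less_one)
    then show ?thesis using that[of N] by (simp add: dist_norm less_imp_le)
  qed
  have Wk: "norm (W n) \<le> (1/2) ^ k * (2 * M * M)" if "n \<ge> N" for n k
    using that
  proof (induction k arbitrary: n)
    case 0 then show ?case using Wb by simp
  next
    case (Suc k)
    have "norm (W n) = norm (c n) * norm (W (Suc n))" by (simp add: Wrec[of n] norm_mult)
    also have "\<dots> \<le> (1/2) * ((1/2) ^ k * (2 * M * M))"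
      using Suc N by (intro mult_mono) auto
    finally show ?case by simp
  qed
  have W0: "W n = 0" if "n \<ge> N" for n
  proof -
    have "(\<lambda>k. (1/2::real) ^ k * (2 * M * M)) \<longlonglongrightarrow> 0 * (2 * M * M)"
      by (intro tendsto_mult LIMSEQ_power_zero tendsto_const) simp
    then have "norm (W n) \<le> 0"
      using Wk[OF that] by (intro LIMSEQ_le_const) auto
    then show ?thesis by simp
  qed
  obtain N2 where N2: "\<And>n. n \<ge> N2 \<Longrightarrow> u n \<noteq> 0 \<and> v n \<noteq> 0"
  proof -
    have "eventually (\<lambda>n. u n \<noteq> 0) sequentially" by (rule tendsto_imp_eventually_ne[OF u1]) simp
    moreover have "eventually (\<lambda>n. v n \<noteq> 0) sequentially" by (rule tendsto_imp_eventually_ne[OF v1]) simp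
    ultimately show ?thesis using that unfolding eventually_sequentially
      by (metis (full_types) eventually_conj eventually_sequentially)
  qed
  define K where "K = max N N2"
  have ratio: "u n / v n = u K / v K" if "n \<ge> K" for n
    using that
  proof (induction n rule: dec_induct)
    case base then show ?case by simp
  next
    case (step n)
    have "W n = 0" using W0 step K_def by simp
    moreover have "v n \<noteq> 0" "v (Suc n) \<noteq> 0" using N2 step K_def by auto
    ultimately have "u (Suc n) / v (Suc n) = u n / v n"
      unfolding W_def by (simp add: field_simps)
    then show ?case using step by simp
  qed
  have "(\<lambda>n. u n / v n) \<longlonglongrightarrow> 1 / 1" by (intro tendsto_divide u1 v1) simp
  moreover have "eventually (\<lambda>n. u n / v n = u K / v K) sequentially"
    using ratio unfolding eventually_sequentially by blast
  ultimately have "(\<lambda>n. u K / v K) \<longlonglongrightarrow> 1"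
    by (simp add: tendsto_cong)
  then have rK: "u K / v K = 1" by (simp add: LIMSEQ_const_iff)
  have eqK: "u n = v n" if "n \<ge> K" for n
  proof -
    have "v n \<noteq> 0" using N2 that K_def by auto
    then show ?thesis using ratio[OF that] rK by (simp add: field_simps)
  qed
  have "\<forall>n. n + d \<ge> K \<longrightarrow> u n = v n" for d
  proof (induction d)
    case 0 then show ?case using eqK by simp
  next
    case (Suc d)
    show ?case
    proof (intro allI impI)
      fix n assume "n + Suc d \<ge> K"
      then have "u (Suc n) = v (Suc n)" "u (Suc (Suc n)) = v (Suc (Suc n))"
        using Suc.IH by auto
      then show "u n = v n" by (subst ru, subst rv) simp
    qed
  qed
  then show ?thesis by (metis le_add2)
qed

definition tk :: "complex \<Rightarrow> complex \<Rightarrow> real \<Rightarrow> complex \<Rightarrow> nat \<Rightarrow> complex" where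
  "tk a b q w k = (-1) ^ k * complex_of_real q ^ (k * (k - 1) div 2)
      * qpoch a q k / (qpoch b q k * qpoch (complex_of_real q) q k) * w ^ k"

lemma phi11_tk: "phi11 a b q w = (\<Sum>k. tk a b q w k)"
  by (simp add: phi11_def tk_def)

lemma tri_Suc: "Suc k * (Suc k - 1) div 2 = k * (k - 1) div 2 + k"
proof (cases k)
  case 0 then show ?thesis by simp
next
  case (Suc j)
  have "Suc k * (Suc k - 1) = k * (k - 1) + k * 2" using Suc by (simp add: algebra_simps)
  then show ?thesis by simp
qed

lemma tk_Suc:
  "tk a b q w (Suc k) = tk a b q w k *
     (- (complex_of_real q ^ k) * (1 - a * complex_of_real q ^ k) * w
      * inverse (1 - b * complex_of_real q ^ k) * inverse (1 - complex_of_real q * complex_of_real q ^ k))"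
  unfolding tk_def qpoch_Suc1 tri_Suc
  by (simp add: divide_inverse inverse_mult_distrib power_add mult_ac)

lemma tk_summable_norm:
  assumes "0 < q" "q < 1"
  shows "summable (\<lambda>k. norm (tk a b q w k))"
proof -
  let ?Q = "complex_of_real q"
  define g where "g k = - (?Q ^ k) * (1 - a * ?Q ^ k) * w * inverse (1 - b * ?Q ^ k) * inverse (1 - ?Q * ?Q ^ k)" for k
  have Q0: "(\<lambda>k. ?Q ^ k) \<longlonglongrightarrow> 0"
    using assms by (intro LIMSEQ_power_zero) simp
  have "g \<longlonglongrightarrow> - 0 * (1 - a * 0) * w * inverse (1 - b * 0) * inverse (1 - ?Q * 0)"
    unfolding g_def by (intro tendsto_intros Q0) auto
  then have "(\<lambda>k. norm (g k)) \<longlonglongrightarrow> 0" by (simp add: tendsto_norm_zero)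
  then have "eventually (\<lambda>k. norm (g k) < 1/2) sequentially"
    by (rule order_tendstoD) simp
  then obtain N where N: "\<And>k. k \<ge> N \<Longrightarrow> norm (g k) < 1/2"
    unfolding eventually_sequentially by blast
  show ?thesis
  proof (rule summable_ratio_test[of "1/2" N])
    fix k assume "k \<ge> N"
    have "norm (norm (tk a b q w (Suc k))) = norm (tk a b q w k) * norm (g k)"
      by (simp add: tk_Suc g_def norm_mult)
    also have "\<dots> \<le> 1/2 * norm (norm (tk a b q w k))"
      using N[OF \<open>k \<ge> N\<close>] mult_left_mono[of "norm (g k)" "1/2" "norm (tk a b q w k)"]
      by (simp add: mult.commute)
    finally show "norm (norm (tk a b q w (Suc k))) \<le> 1/2 * norm (norm (tk a b q w k))" .
  qed simp
qed

lemma tk_summable: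
  assumes "0 < q" "q < 1"
  shows "summable (tk a b q w)"
  by (rule summable_norm_cancel[OF tk_summable_norm[OF assms]])

lemma core_alg:
  fixes a b z Q Qm P E H X Y S :: complex
  assumes "1 - b \<noteq> 0" "E \<noteq> 0" "H \<noteq> 0" "1 - Q * Qm \<noteq> 0" "1 - b * Q * Qm \<noteq> 0" "1 - b * Q \<noteq> 0"
  shows "(1-b)*(1-b*Q)* ((-S) * (X*Qm) * (P*(1-a*Qm)) / (((1-b)*E) * (H*(1-Q*Qm))) * (Y*(-b*z)))
   = (1-b)*(1-b*Q)* ((-S)*(X*Qm)*(P*(1-a*Qm)) / ((E*(1-b*Q*Qm)) * (H*(1-Q*Qm))) * ((Y*Qm)*(-(b*Q)*z)))
   + (b*z*(1-b*Q)* (S*X*P/(E*H)*(Y*Qm))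
      - (a-b*Q)*b*z*(S*X*P/((E*(1-b*Q*Qm)/(1-b*Q))*H)*(Y*Qm*Qm)))"
  using assms by (simp add: divide_simps) (simp add: algebra_simps)

lemma qpoch_nz:
  assumes "\<And>j. j < k \<Longrightarrow> 1 - b * complex_of_real q ^ j \<noteq> 0"
  shows "qpoch b q k \<noteq> 0"
  using assms by (simp add: qpoch_def)

lemma tk_contig:
  fixes a b z :: complex and q :: real
  defines "Q \<equiv> complex_of_real q"
  assumes q: "0 < q" "q < 1" and nz: "\<And>j. 1 - b * Q ^ j \<noteq> 0"
  shows "(1-b)*(1-b*Q) * tk a b q (-b*z) (Suc m)
     = (1-b)*(1-b*Q) * tk a (b*Q) q (-(b*Q)*z) (Suc m)
       + (b*z*(1-b*Q) * tk a (b*Q) q (-(b*Q)*z) m - (a-b*Q)*b*z * tk a (b*Q*Q) q (-(b*Q*Q)*z) m)"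
proof -
  define E where "E = qpoch (b*Q) q m"
  define H where "H = qpoch Q q m"
  define P where "P = qpoch a q m"
  define X where "X = Q ^ (m * (m - 1) div 2)"
  define Y where "Y = (-b*z) ^ m"
  define S where "S = (-1::complex) ^ m"
  define Qm where "Qm = Q ^ m"
  have nz1: "1 - b \<noteq> 0" using nz[of 0] by simp
  have nzQ: "1 - b * Q \<noteq> 0" using nz[of 1] by simp
  have nzE: "E \<noteq> 0" unfolding E_def Q_def[symmetric] using nz
    by (intro qpoch_nz) (metis mult.assoc power_Suc Q_def)
  have Qn: "Q ^ j \<noteq> 1" if "j > 0" for j
  proof -
    have "q ^ j < 1" using q that by (simp add: power_less_one_iff)
    then show ?thesis unfolding Q_def by (metis of_real_1 of_real_eq_iff of_real_power less_irrefl)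
  qed
  have nzH: "H \<noteq> 0" unfolding H_def
    by (intro qpoch_nz) (metis Qn Q_def power_Suc right_minus_eq zero_less_Suc)
  have nzQQ: "1 - Q * Qm \<noteq> 0" using Qn[of "Suc m"] by (simp add: Qm_def)
  have nzbQQ: "1 - b * Q * Qm \<noteq> 0" using nz[of "Suc m"] by (simp add: Qm_def mult.assoc)
  have e1: "qpoch a q (Suc m) = P * (1 - a * Qm)" by (simp add: qpoch_Suc1 P_def Qm_def Q_def)
  have e2: "qpoch Q q (Suc m) = H * (1 - Q * Qm)" by (simp add: qpoch_Suc1 H_def Qm_def Q_def)
  have e3: "qpoch b q (Suc m) = (1 - b) * E" by (simp add: qpoch_Suc2 E_def Q_def)
  have e4: "qpoch (b*Q) q (Suc m) = E * (1 - b * Q * Qm)" by (simp add: qpoch_Suc1 E_def Qm_def Q_def)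
  have "qpoch (b*Q) q (Suc m) = (1 - b*Q) * qpoch (b*Q*Q) q m" by (simp add: qpoch_Suc2 Q_def)
  then have h: "(1 - b*Q) * qpoch (b*Q*Q) q m = E * (1 - b * Q * Qm)" using e4 by simp
  have e5: "qpoch (b*Q*Q) q m = E * (1 - b * Q * Qm) / (1 - b * Q)"
    unfolding h[symmetric] using nzQ by simp
  have p1: "(- (b * Q) * z) ^ m = Y * Qm" by (simp add: Y_def Qm_def power_mult_distrib[symmetric] algebra_simps)
  have p2: "(- (b * Q * Q) * z) ^ m = Y * Qm * Qm" by (simp add: Y_def Qm_def power_mult_distrib[symmetric] algebra_simps)
  have t1: "tk a b q (-b*z) (Suc m) = (-S) * (X*Qm) * (P*(1-a*Qm)) / (((1-b)*E) * (H*(1-Q*Qm))) * (Y*(-b*z))"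
    unfolding tk_def tri_Suc e1 e3 Q_def[symmetric] e2 by (simp add: S_def X_def Qm_def Y_def power_add)
  have t2: "tk a (b*Q) q (-(b*Q)*z) (Suc m) = (-S)*(X*Qm)*(P*(1-a*Qm)) / ((E*(1-b*Q*Qm)) * (H*(1-Q*Qm))) * ((Y*Qm)*(-(b*Q)*z))"
    unfolding tk_def tri_Suc e1 e4 Q_def[symmetric] e2 power_Suc p1 by (simp add: S_def X_def Qm_def power_add)
  have t3: "tk a (b*Q) q (-(b*Q)*z) m = S*X*P/(E*H)*(Y*Qm)"
    unfolding tk_def Q_def[symmetric] p1 by (simp add: S_def X_def P_def E_def H_def)
  have t4: "tk a (b*Q*Q) q (-(b*Q*Q)*z) m = S*X*P/((E*(1-b*Q*Qm)/(1-b*Q))*H)*(Y*Qm*Qm)"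
    unfolding tk_def Q_def[symmetric] p2 e5 by (simp add: S_def X_def P_def H_def)
  show ?thesis unfolding t1 t2 t3 t4
    by (rule core_alg[OF nz1 nzE nzH nzQQ nzbQQ nzQ])
qed

lemma tk0: "tk a b q w 0 = 1" by (simp add: tk_def qpoch_def)

lemma phi_contig:
  fixes a b z :: complex and q :: real
  defines "Q \<equiv> complex_of_real q"
  assumes q: "0 < q" "q < 1" and nz: "\<And>j. 1 - b * Q ^ j \<noteq> 0"
  shows "(1-b)*(1-b*Q) * phi11 a b q (-b*z)
     = ((1-b) + b*z)*(1-b*Q) * phi11 a (b*Q) q (-(b*Q)*z) - (a-b*Q)*b*z * phi11 a (b*Q*Q) q (-(b*Q*Q)*z)"
proof -
  define t0 where "t0 = tk a b q (-b*z)"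
  define t1 where "t1 = tk a (b*Q) q (-(b*Q)*z)"
  define t2 where "t2 = tk a (b*Q*Q) q (-(b*Q*Q)*z)"
  define B where "B m = b*z*(1-b*Q) * t1 m - (a-b*Q)*b*z * t2 m" for m
  define g where "g k = (1-b)*(1-b*Q) * t1 k + (case k of 0 \<Rightarrow> 0 | Suc m \<Rightarrow> B m)" for k
  have s0: "t0 sums phi11 a b q (-b*z)" unfolding t0_def phi11_tk
    by (rule summable_sums[OF tk_summable[OF q]])
  have s1: "t1 sums phi11 a (b*Q) q (-(b*Q)*z)" unfolding t1_def phi11_tk
    by (rule summable_sums[OF tk_summable[OF q]])
  have s2: "t2 sums phi11 a (b*Q*Q) q (-(b*Q*Q)*z)" unfolding t2_def phi11_tk
    by (rule summable_sums[OF tk_summable[OF q]])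
  have sB: "B sums (b*z*(1-b*Q) * phi11 a (b*Q) q (-(b*Q)*z) - (a-b*Q)*b*z * phi11 a (b*Q*Q) q (-(b*Q*Q)*z))"
    unfolding B_def by (intro sums_diff sums_mult s1 s2)
  have sB': "(\<lambda>k. case k of 0 \<Rightarrow> 0 | Suc m \<Rightarrow> B m) sums
     (b*z*(1-b*Q) * phi11 a (b*Q) q (-(b*Q)*z) - (a-b*Q)*b*z * phi11 a (b*Q*Q) q (-(b*Q*Q)*z))"
    using sB sums_Suc_iff[of "\<lambda>k. case k of 0 \<Rightarrow> 0 | Suc m \<Rightarrow> B m"] by simp
  have sg: "g sums ((1-b)*(1-b*Q) * phi11 a (b*Q) q (-(b*Q)*z) +
     (b*z*(1-b*Q) * phi11 a (b*Q) q (-(b*Q)*z) - (a-b*Q)*b*z * phi11 a (b*Q*Q) q (-(b*Q*Q)*z)))"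
    unfolding g_def by (intro sums_add sums_mult s1 sB')
  have fg: "(1-b)*(1-b*Q) * t0 k = g k" for k
  proof (cases k)
    case 0 then show ?thesis by (simp add: g_def t0_def t1_def tk0)
  next
    case (Suc m)
    show ?thesis unfolding Suc g_def B_def t0_def t1_def t2_def
      using tk_contig[OF q, of b a z m] nz unfolding Q_def by simp
  qed
  have "(\<lambda>k. (1-b)*(1-b*Q) * t0 k) sums ((1-b)*(1-b*Q) * phi11 a b q (-b*z))"
    by (intro sums_mult s0)
  then have "g sums ((1-b)*(1-b*Q) * phi11 a b q (-b*z))" using fg by simp
  from sums_unique2[OF this sg] show ?thesis by (simp add: algebra_simps)
qed

lemma R_alg:
  fixes A2 B2 D0 D1 F0 F1 F2 b bQ c G L :: complex
  assumes "D0 \<noteq> 0" "D1 \<noteq> 0" "B2 \<noteq> 0"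
    and pc: "G * F0 = D0 * L * F1 - c * F2"
  shows "G * A2 / (D0 * (D1 * B2)) * F0 = L * A2 / (D1 * B2) * F1 - (c / (D0 * D1)) * (A2 / B2 * F2)"
proof -
  have "L * A2 / (D1 * B2) * F1 - (c / (D0 * D1)) * (A2 / B2 * F2)
      = A2 / (D0 * (D1 * B2)) * (D0 * L * F1 - c * F2)"
    using assms(1-3) by (simp add: field_simps)
  also have "\<dots> = G * A2 / (D0 * (D1 * B2)) * F0" by (simp add: pc[symmetric])
  finally show ?thesis by simp
qed

definition Rf :: "complex \<Rightarrow> complex \<Rightarrow> real \<Rightarrow> complex \<Rightarrow> complex" where
  "Rf a z q b = qpoch_inf b q / qpoch_inf ((1-z)*b) q * phi11 a b q (-b*z)"

lemma R_rec:
  fixes a b z :: complex and q :: real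
  defines "Q \<equiv> complex_of_real q"
  assumes q: "0 < q" "q < 1" and nz: "\<And>j. 1 - b * Q ^ j \<noteq> 0"
    and D0: "1 - (1-z)*b \<noteq> 0" and D1: "1 - (1-z)*(b*Q) \<noteq> 0"
  shows "Rf a z q b = Rf a z q (b*Q) - (b*(a-b*Q)*z / ((1-(1-z)*b)*(1-(1-z)*(b*Q)))) * Rf a z q (b*Q*Q)"
proof -
  have aq: "\<bar>q\<bar> < 1" using q by simp
  define A2 where "A2 = qpoch_inf (b*Q*Q) q"
  define B2 where "B2 = qpoch_inf ((1-z)*(b*Q*Q)) q"
  have a1: "qpoch_inf (b*Q) q = (1-b*Q) * A2"
    unfolding A2_def Q_def by (rule qI_split[OF aq])
  have a0: "qpoch_inf b q = (1-b) * ((1-b*Q) * A2)"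
    using qI_split[OF aq, of b] a1 unfolding Q_def by simp
  have b1: "qpoch_inf ((1-z)*(b*Q)) q = (1-(1-z)*(b*Q)) * B2"
    unfolding B2_def Q_def using qI_split[OF aq, of "(1-z)*(b * of_real q)"] by (simp add: mult.assoc)
  have b0: "qpoch_inf ((1-z)*b) q = (1-(1-z)*b) * ((1-(1-z)*(b*Q)) * B2)"
    using qI_split[OF aq, of "(1-z)*b"] b1 unfolding Q_def by (simp add: mult.assoc)
  have nz1: "1 - b \<noteq> 0" using nz[of 0] by simp
  have nzQ: "1 - b * Q \<noteq> 0" using nz[of 1] by simp
  have pc: "(1-b)*(1-b*Q) * phi11 a b q (-b*z)
     = ((1-b) + b*z)*(1-b*Q) * phi11 a (b*Q) q (-(b*Q)*z) - (a-b*Q)*b*z * phi11 a (b*Q*Q) q (-(b*Q*Q)*z)"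
    using phi_contig[OF q, of b a z] nz unfolding Q_def by simp
  show ?thesis
  proof (cases "B2 = 0")
    case True then show ?thesis unfolding Rf_def a0 a1 b0 b1 by (simp add: B2_def)
  next
    case False
    have e: "(1-(1-z)*b) = (1-b) + b*z" by (simp add: algebra_simps)
    have pc': "((1-b)*(1-b*Q)) * phi11 a b q (-b*z)
      = (1-(1-z)*b) * (1-b*Q) * phi11 a (b*Q) q (-(b*Q)*z) - (b*(a-b*Q)*z) * phi11 a (b*Q*Q) q (-(b*Q*Q)*z)"
      using pc unfolding e by (simp add: ac_simps)
    have "(1-b) * ((1-b*Q) * A2) / ((1-(1-z)*b) * ((1-(1-z)*(b*Q)) * B2)) * phi11 a b q (-b*z)
      = (1-b*Q) * A2 / ((1-(1-z)*(b*Q)) * B2) * phi11 a (b*Q) q (-(b*Q)*z)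
        - (b*(a-b*Q)*z / ((1-(1-z)*b)*(1-(1-z)*(b*Q)))) * (A2 / B2 * phi11 a (b*Q*Q) q (-(b*Q*Q)*z))"
      using R_alg[OF D0 D1 False pc'] by (simp add: ac_simps)
    then show ?thesis unfolding Rf_def a0 a1 b0 b1 B2_def[symmetric] A2_def[symmetric] .
  qed
qed

lemma geo_partial_le:
  fixes q :: real assumes "0 \<le> q" "q < 1"
  shows "(\<Sum>j<k. q ^ j) \<le> 1 / (1 - q)"
proof -
  have gs: "(\<lambda>j. q ^ j) sums (1 / (1 - q))" using assms geometric_sums[of q] by simp
  show ?thesis using sum_le_suminf[OF sums_summable[OF gs], of "{..<k}"] sums_unique[OF gs] assms by simp
qed

lemma prod_ge_1_minus_sum:
  fixes x :: "nat \<Rightarrow> real"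
  assumes "finite A" "\<And>j. j \<in> A \<Longrightarrow> 0 \<le> x j \<and> x j \<le> 1"
  shows "1 - sum x A \<le> (\<Prod>j\<in>A. 1 - x j)"
  using assms
proof (induction A rule: finite_induct)
  case empty then show ?case by simp
next
  case (insert i A)
  have IH: "1 - sum x A \<le> (\<Prod>j\<in>A. 1 - x j)" using insert by auto
  have xi: "0 \<le> x i" "x i \<le> 1" using insert by auto
  have S0: "0 \<le> sum x A" using insert by (intro sum_nonneg) auto
  have "1 - sum x (insert i A) = 1 - x i - sum x A" using insert by simp
  also have "\<dots> \<le> (1 - x i) * (1 - sum x A)" using xi S0 by (simp add: algebra_simps)
  also have "\<dots> \<le> (1 - x i) * (\<Prod>j\<in>A. 1 - x j)" using IH xi by (intro mult_left_mono) auto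
  also have "\<dots> = (\<Prod>j\<in>insert i A. 1 - x j)" using insert by simp
  finally show ?case .
qed

lemma qpoch_norm_le:
  assumes "0 \<le> q" "q < 1"
  shows "norm (qpoch a q k) \<le> exp (norm a / (1 - q))"
proof -
  have "norm (qpoch a q k) = (\<Prod>j<k. norm (1 - a * complex_of_real q ^ j))"
    by (simp add: qpoch_def prod_norm)
  also have "\<dots> \<le> (\<Prod>j<k. exp (norm a * q ^ j))"
  proof (intro prod_mono conjI)
    fix j
    have "norm (1 - a * complex_of_real q ^ j) \<le> 1 + norm a * q ^ j"
      using norm_triangle_ineq4[of 1 "a * complex_of_real q ^ j"] assms by (simp add: norm_mult norm_power)
    also have "\<dots> \<le> exp (norm a * q ^ j)" by (simp add: add.commute exp_ge_add_one_self)
    finally show "norm (1 - a * complex_of_real q ^ j) \<le> exp (norm a * q ^ j)" .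
  qed simp
  also have "\<dots> = exp (norm a * (\<Sum>j<k. q ^ j))" by (simp add: exp_sum sum_distrib_left)
  also have "\<dots> \<le> exp (norm a * (1 / (1 - q)))"
    using geo_partial_le[OF assms, of k] by (intro iffD2[OF exp_le_cancel_iff] mult_left_mono) auto
  finally show ?thesis by simp
qed

lemma qpoch_norm_ge:
  assumes "0 \<le> q" "q < 1" "norm b \<le> (1 - q) / 2"
  shows "1/2 \<le> norm (qpoch b q k)"
proof -
  have nb1: "norm b \<le> 1" using assms by simp
  have "1/2 \<le> 1 - norm b * (1 / (1 - q))" using assms by (simp add: field_simps)
  also have "\<dots> \<le> 1 - norm b * (\<Sum>j<k. q ^ j)"
    using geo_partial_le[OF assms(1,2), of k] by (intro diff_left_mono mult_left_mono) auto
  also have "\<dots> = 1 - (\<Sum>j<k. norm b * q ^ j)" by (simp add: sum_distrib_left)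
  also have "\<dots> \<le> (\<Prod>j<k. 1 - norm b * q ^ j)"
    using assms nb1 by (intro prod_ge_1_minus_sum) (auto simp: mult_le_one power_le_one)
  also have "\<dots> \<le> (\<Prod>j<k. norm (1 - b * complex_of_real q ^ j))"
  proof (intro prod_mono conjI)
    fix j assume "j \<in> {..<k}"
    show "0 \<le> 1 - norm b * q ^ j" using assms nb1 by (simp add: mult_le_one power_le_one)
    show "1 - norm b * q ^ j \<le> norm (1 - b * complex_of_real q ^ j)"
      using norm_triangle_ineq2[of 1 "b * complex_of_real q ^ j"] assms by (simp add: norm_mult norm_power)
  qed
  also have "\<dots> = norm (qpoch b q k)" by (simp add: qpoch_def prod_norm)
  finally show ?thesis .
qed

lemma tk_norm:
  "norm (tk a b q w k) = \<bar>q\<bar> ^ (k * (k - 1) div 2) * norm (qpoch a q k)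
     / (norm (qpoch b q k) * norm (qpoch (complex_of_real q) q k)) * norm w ^ k"
  by (simp add: tk_def norm_mult norm_divide norm_power)

lemma qpoch_zero: "qpoch 0 q k = 1" by (simp add: qpoch_def)

lemma tk_norm_bound:
  assumes q: "0 < q" "q < 1" and b: "norm b \<le> (1 - q) / 2" and k: "k \<ge> 1"
  shows "norm (tk a b q (-b*z) k)
     \<le> norm b * (2 * exp (norm a / (1 - q))) * norm (tk 0 0 q (of_real (norm z)) k)"
proof -
  define X where "X = \<bar>q\<bar> ^ (k * (k - 1) div 2) / norm (qpoch (complex_of_real q) q k) * norm z ^ k"
  have X0: "0 \<le> X" unfolding X_def by simp
  have N0: "norm (tk 0 0 q (of_real (norm z)) k) = X"
    unfolding tk_norm X_def qpoch_zero by simp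
  have nb1: "norm b \<le> 1" using q b by simp
  have Nb: "1/2 \<le> norm (qpoch b q k)" by (rule qpoch_norm_ge) (use q b in auto)
  have Na: "norm (qpoch a q k) \<le> exp (norm a / (1 - q))" by (rule qpoch_norm_le) (use q in auto)
  have L: "norm (tk a b q (-b*z) k) = X * (norm (qpoch a q k) / norm (qpoch b q k)) * norm b ^ k"
    unfolding tk_norm X_def by (simp add: norm_mult power_mult_distrib divide_inverse inverse_mult_distrib ac_simps)
  have r1: "norm (qpoch a q k) / norm (qpoch b q k) \<le> 2 * exp (norm a / (1 - q))"
  proof -
    have "norm (qpoch a q k) / norm (qpoch b q k) \<le> exp (norm a / (1 - q)) / (1/2)"
      using Na Nb by (intro frac_le) auto
    then show ?thesis by simp
  qed
  have r2: "norm b ^ k \<le> norm b"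
    using k nb1 by (metis norm_ge_zero power_decreasing power_one_right)
  have "X * (norm (qpoch a q k) / norm (qpoch b q k)) * norm b ^ k
       \<le> X * (2 * exp (norm a / (1 - q))) * norm b"
    using X0 r1 r2 by (intro mult_mono mult_left_mono) auto
  then show ?thesis unfolding L N0 by (simp add: ac_simps)
qed

lemma phi_bound:
  assumes q: "0 < q" "q < 1" and b: "norm b \<le> (1 - q) / 2"
  shows "norm (phi11 a b q (-b*z) - 1)
     \<le> norm b * ((2 * exp (norm a / (1 - q))) * (\<Sum>k. norm (tk 0 0 q (of_real (norm z)) (Suc k))))"
proof -
  let ?t = "tk a b q (-b*z)"
  let ?s = "\<lambda>k. norm (tk 0 0 q (of_real (norm z)) (Suc k))"
  let ?C = "2 * exp (norm a / (1 - q))"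
  have st: "summable ?t" by (rule tk_summable[OF q])
  have sn: "summable (\<lambda>k. norm (?t (Suc k)))"
    using tk_summable_norm[OF q, of a b "-b*z"] by (subst summable_Suc_iff)
  have ss: "summable ?s"
    using tk_summable_norm[OF q, of 0 0 "of_real (norm z)"] by (subst summable_Suc_iff)
  have "phi11 a b q (-b*z) - 1 = (\<Sum>k. ?t (Suc k))"
    unfolding phi11_tk suminf_split_head[OF st] by (simp add: tk0)
  then have "norm (phi11 a b q (-b*z) - 1) \<le> (\<Sum>k. norm (?t (Suc k)))"
    using summable_norm[OF sn] by simp
  also have "\<dots> \<le> (\<Sum>k. norm b * ?C * ?s k)"
    by (intro suminf_le sn summable_mult ss tk_norm_bound q b) simp
  also have "\<dots> = norm b * ?C * (\<Sum>k. ?s k)" by (rule suminf_mult[OF ss])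
  finally show ?thesis by (simp add: ac_simps)
qed

lemma phi_lim:
  assumes q: "0 < q" "q < 1" and w: "w \<longlonglongrightarrow> 0"
  shows "(\<lambda>n. phi11 a (w n) q (-(w n)*z)) \<longlonglongrightarrow> 1"
proof -
  define C where "C = (2 * exp (norm a / (1 - q))) * (\<Sum>k. norm (tk 0 0 q (of_real (norm z)) (Suc k)))"
  have ev: "eventually (\<lambda>n. norm (w n) \<le> (1 - q) / 2) sequentially"
  proof -
    have "(\<lambda>n. norm (w n)) \<longlonglongrightarrow> 0" using w by (simp add: tendsto_norm_zero)
    then have "eventually (\<lambda>n. norm (w n) < (1 - q) / 2) sequentially"
      by (rule order_tendstoD) (use q in simp)
    then show ?thesis by (rule eventually_mono) simp
  qed
  have "(\<lambda>n. norm (w n) * C) \<longlonglongrightarrow> 0 * C"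
    using w by (intro tendsto_mult tendsto_const) (simp add: tendsto_norm_zero)
  then have t0: "(\<lambda>n. norm (w n) * C) \<longlonglongrightarrow> 0" by simp
  have "(\<lambda>n. phi11 a (w n) q (-(w n)*z) - 1) \<longlonglongrightarrow> 0"
  proof (rule Lim_null_comparison[OF _ t0])
    show "\<forall>\<^sub>F n in sequentially. norm (phi11 a (w n) q (-(w n)*z) - 1) \<le> norm (w n) * C"
      using ev by (rule eventually_mono) (use phi_bound[OF q] in \<open>simp add: C_def\<close>)
  qed
  then show ?thesis by (simp add: LIM_zero_iff)
qed

lemma Rf_lim:
  assumes q: "0 < q" "q < 1" and w: "w \<longlonglongrightarrow> 0"
  shows "(\<lambda>n. Rf a z q (w n)) \<longlonglongrightarrow> 1"
proof -
  have aq: "\<bar>q\<bar> < 1" using q by simp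
  have w2: "(\<lambda>n. (1 - z) * w n) \<longlonglongrightarrow> 0" using tendsto_mult[OF tendsto_const w, of "1-z"] by simp
  have "(\<lambda>n. qpoch_inf (w n) q / qpoch_inf ((1-z) * w n) q * phi11 a (w n) q (-(w n)*z)) \<longlonglongrightarrow> 1 / 1 * 1"
    by (intro tendsto_mult tendsto_divide qI_tendsto1[OF aq] w w2 phi_lim[OF q]) simp
  then show ?thesis unfolding Rf_def by simp
qed

lemma qpow_add: "qpow q (s + t) = qpow q s * qpow q t"
  by (simp add: qpow_def distrib_right exp_add)

lemma qpow_nat: "0 < q \<Longrightarrow> qpow q (of_nat n) = complex_of_real q ^ n"
  by (simp add: qpow_def exp_of_nat_mult exp_of_real)

lemma qpow_nz: "qpow q s \<noteq> 0" by (simp add: qpow_def)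

lemma qpow_diff: "qpow q (s - t) = qpow q s / qpow q t"
  by (simp add: qpow_def exp_diff left_diff_distrib)

lemma c_alg:
  fixes P2 P3 A E1 E2 g1 b Q s z D1 D2 :: complex
  assumes "P2 \<noteq> 0" "P3 \<noteq> 0" "A \<noteq> 0" "E1 * E2 = A * b" "g1 = b * Q / A" "s * s = z"
  shows "E1*((1-g1)*P3)* s/(P2*D1) * (E2*P2* s/(P3*D2)) = b*(A - b*Q)*z/(D1*D2)"
proof (cases "D1 = 0 \<or> D2 = 0")
  case True then show ?thesis by auto
next
  case False
  have "E1*((1-g1)*P3)* s/(P2*D1) * (E2*P2* s/(P3*D2)) = (E1*E2)*(1-g1)*(s * s)/(D1*D2)"
    using assms(1,2) False by (simp add: field_simps)
  also have "\<dots> = b*(A - b*Q)*z/(D1*D2)"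
    unfolding assms(4,5,6) using assms(3) False by (simp add: field_simps)
  finally show ?thesis .
qed

lemma cformula:
  fixes q :: real and \<alpha> \<gamma> z :: complex and n :: nat
  defines "Q \<equiv> complex_of_real q"
  defines "x \<equiv> (\<lambda>k. qpow q ((\<alpha> + \<gamma> + of_nat k) / 2 - 3 / 4)
              * qpoch_inf (qpow q (\<gamma> - \<alpha> + of_nat k)) (q ^ 2) * csqrt z
            / (qpoch_inf (qpow q (\<gamma> - \<alpha> + of_nat k + 1)) (q ^ 2)
               * (1 - (1 - z) * qpow q (\<gamma> + of_nat k - 1))))"
  defines "b \<equiv> qpow q \<gamma> * Q ^ n"
  assumes q: "0 < q" "q < 1"
    and H3: "\<forall>k::nat. 1 \<le> k \<longrightarrow> qpoch_inf (qpow q (\<gamma> - \<alpha> + of_nat k + 1)) (q ^ 2) \<noteq> 0"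
  shows "x (Suc n) * x (Suc (Suc n)) = b * (qpow q \<alpha> - b * Q) * z / ((1 - (1-z)*b) * (1 - (1-z)*(b*Q)))"
proof -
  define pp where "pp k = qpoch_inf (qpow q (\<gamma> - \<alpha> + of_nat k)) (q ^ 2)" for k :: nat
  have aq2: "\<bar>q ^ 2\<bar> < 1" using q by (simp add: power_less_one_iff abs_square_less_1)
  have xk: "x k = qpow q ((\<alpha> + \<gamma> + of_nat k) / 2 - 3 / 4) * pp k * csqrt z
     / (pp (Suc k) * (1 - (1 - z) * qpow q (\<gamma> + of_nat k - 1)))" for k
    unfolding x_def pp_def by (simp add: ac_simps)
  have n2: "pp (Suc (Suc n)) \<noteq> 0" using H3[rule_format, of "Suc n"] unfolding pp_def by (simp add: add.assoc)
  have pps: "pp (Suc n) = (1 - qpow q (\<gamma> - \<alpha> + of_nat (Suc n))) * pp (Suc (Suc (Suc n)))"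
  proof -
    have "pp (Suc n) = (1 - qpow q (\<gamma> - \<alpha> + of_nat (Suc n))) *
            qpoch_inf (qpow q (\<gamma> - \<alpha> + of_nat (Suc n)) * of_real (q ^ 2)) (q ^ 2)"
      unfolding pp_def by (rule qI_split[OF aq2])
    also have "qpow q (\<gamma> - \<alpha> + of_nat (Suc n)) * of_real (q ^ 2) = qpow q (\<gamma> - \<alpha> + of_nat (Suc (Suc (Suc n))))"
    proof -
      have "qpow q (\<gamma> - \<alpha> + of_nat (Suc (Suc (Suc n)))) = qpow q (\<gamma> - \<alpha> + of_nat (Suc n) + of_nat 2)"
        by (simp add: algebra_simps)
      also have "\<dots> = qpow q (\<gamma> - \<alpha> + of_nat (Suc n)) * of_real (q ^ 2)"
        unfolding qpow_add[of q _ "of_nat 2"] qpow_nat[OF q(1)] by simp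
      finally show ?thesis by simp
    qed
    finally show ?thesis unfolding pp_def .
  qed
  have e: "qpow q ((\<alpha> + \<gamma> + of_nat (Suc n)) / 2 - 3 / 4) * qpow q ((\<alpha> + \<gamma> + of_nat (Suc (Suc n))) / 2 - 3 / 4)
        = qpow q \<alpha> * qpow q \<gamma> * Q ^ n"
  proof -
    have "qpow q ((\<alpha> + \<gamma> + of_nat (Suc n)) / 2 - 3 / 4) * qpow q ((\<alpha> + \<gamma> + of_nat (Suc (Suc n))) / 2 - 3 / 4)
        = qpow q (\<alpha> + \<gamma> + of_nat n)"
    proof -
      have "(\<alpha> + \<gamma> + of_nat (Suc n)) / 2 - 3 / 4 + ((\<alpha> + \<gamma> + of_nat (Suc (Suc n))) / 2 - 3 / 4) = \<alpha> + \<gamma> + of_nat n"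
        by (simp add: field_simps of_nat_Suc)
      then show ?thesis unfolding qpow_add[symmetric] by simp
    qed
    then show ?thesis unfolding qpow_add qpow_nat[OF q(1)] Q_def by simp
  qed
  have g: "qpow q (\<gamma> - \<alpha> + of_nat (Suc n)) = qpow q \<gamma> * Q ^ n * Q / qpow q \<alpha>"
    unfolding qpow_add qpow_diff qpow_nat[OF q(1)] Q_def by simp
  have d1: "qpow q (\<gamma> + of_nat (Suc n) - 1) = b"
    unfolding b_def Q_def by (simp add: qpow_nat[OF q(1), symmetric] qpow_add[symmetric])
  have d2: "qpow q (\<gamma> + of_nat (Suc (Suc n)) - 1) = b * Q"
  proof -
    have "qpow q (\<gamma> + of_nat (Suc (Suc n)) - 1) = qpow q (\<gamma> + of_nat (Suc n))" by (simp add: algebra_simps)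
    then show ?thesis unfolding b_def Q_def qpow_add qpow_nat[OF q(1)] by simp
  qed
  have sz: "csqrt z * csqrt z = z" using power2_csqrt[of z] by (simp add: power2_eq_square)
  have A0: "qpow q \<alpha> \<noteq> 0" by (rule qpow_nz)
  have n3: "pp (Suc (Suc (Suc n))) \<noteq> 0" using H3[rule_format, of "Suc (Suc n)"] unfolding pp_def by (simp add: add.assoc)
  have e': "qpow q ((\<alpha> + \<gamma> + of_nat (Suc n)) / 2 - 3 / 4) * qpow q ((\<alpha> + \<gamma> + of_nat (Suc (Suc n))) / 2 - 3 / 4)
        = qpow q \<alpha> * b" unfolding e b_def by (simp add: mult.assoc)
  have g': "qpow q (\<gamma> - \<alpha> + of_nat (Suc n)) = b * Q / qpow q \<alpha>" unfolding g b_def by simp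
  show ?thesis
    unfolding xk pps d1 d2 by (rule c_alg[OF n2 n3 A0 e' g' sz])
qed

theorem mainTheorem13:
  fixes q :: real and \<alpha> \<gamma> z :: complex
  assumes "0 < q" and "q < 1"
    and "\<forall>k::nat. 1 \<le> k \<longrightarrow> qpoch_inf (qpow q (\<gamma> - \<alpha> + of_nat k + 1)) (q ^ 2) \<noteq> 0"
    and "\<forall>k::nat. 1 \<le> k \<longrightarrow> 1 - (1 - z) * qpow q (\<gamma> + of_nat k - 1) \<noteq> 0"
    and "\<forall>k. qpoch (qpow q \<gamma>) q k \<noteq> 0"
  shows "frakF (\<lambda>k. qpow q ((\<alpha> + \<gamma> + of_nat k) / 2 - 3 / 4)
              * qpoch_inf (qpow q (\<gamma> - \<alpha> + of_nat k)) (q ^ 2) * csqrt z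
            / (qpoch_inf (qpow q (\<gamma> - \<alpha> + of_nat k + 1)) (q ^ 2)
               * (1 - (1 - z) * qpow q (\<gamma> + of_nat k - 1))))
       = qpoch_inf (qpow q \<gamma>) q / qpoch_inf ((1 - z) * qpow q \<gamma>) q
         * phi11 (qpow q \<alpha>) (qpow q \<gamma>) q (- qpow q \<gamma> * z)"
proof -
  note q = assms(1,2)
  define Q where "Q = complex_of_real q"
  define G where "G = qpow q \<gamma>"
  define A where "A = qpow q \<alpha>"
  define x where "x = (\<lambda>k. qpow q ((\<alpha> + \<gamma> + of_nat k) / 2 - 3 / 4)
              * qpoch_inf (qpow q (\<gamma> - \<alpha> + of_nat k)) (q ^ 2) * csqrt z
            / (qpoch_inf (qpow q (\<gamma> - \<alpha> + of_nat k + 1)) (q ^ 2)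
               * (1 - (1 - z) * qpow q (\<gamma> + of_nat k - 1))))"
  define b where "b n = G * Q ^ n" for n
  define c where "c n = x (Suc n) * x (Suc (Suc n))" for n
  have cf: "c n = b n * (A - b n * Q) * z / ((1 - (1-z) * b n) * (1 - (1-z) * (b n * Q)))" for n
    unfolding c_def x_def b_def Q_def G_def A_def using cformula[OF assms(1,2,3)] by simp
  have bS: "b (Suc n) = b n * Q" for n by (simp add: b_def)
  have qg: "qpow q (\<gamma> + of_nat (Suc n) - 1) = b n" for n
    unfolding b_def G_def Q_def by (simp add: qpow_nat[OF q(1), symmetric] qpow_add[symmetric])
  have D: "1 - (1-z) * b n \<noteq> 0" for n
    using assms(4)[rule_format, of "Suc n"] qg[of n] by simp
  have D': "1 - (1-z) * (b n * Q) \<noteq> 0" for n using D[of "Suc n"] bS by simp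
  have nzG: "1 - G * Q ^ j \<noteq> 0" for j
    using assms(5)[rule_format, of "Suc j"] unfolding qpoch_Suc1 G_def Q_def by simp
  have nzb: "1 - b n * Q ^ j \<noteq> 0" for n j
    using nzG[of "n + j"] by (simp add: b_def power_add mult.assoc)
  have Q0: "(\<lambda>n. Q ^ n) \<longlonglongrightarrow> 0" unfolding Q_def using q by (intro LIMSEQ_power_zero) simp
  have b0: "b \<longlonglongrightarrow> 0"
    using tendsto_mult[OF tendsto_const Q0, of G] unfolding b_def[abs_def] by simp
  define h where "h n = G * (A - b n * Q) * z / ((1 - (1-z) * b n) * (1 - (1-z) * (b n * Q)))" for n
  have ch: "c n = Q ^ n * h n" for n unfolding cf h_def b_def by (simp add: ac_simps)
  have "h \<longlonglongrightarrow> G * (A - 0 * Q) * z / ((1 - (1-z) * 0) * (1 - (1-z) * (0 * Q)))"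
    unfolding h_def[abs_def] by (intro tendsto_intros b0) simp
  then have "(\<lambda>n. norm (h n)) \<longlonglongrightarrow> norm (G * A * z)" by (simp add: tendsto_norm)
  then have "eventually (\<lambda>n. norm (h n) < norm (G * A * z) + 1) sequentially"
    by (rule order_tendstoD) simp
  then obtain N where N: "\<And>n. n \<ge> N \<Longrightarrow> norm (h n) < norm (G * A * z) + 1"
    unfolding eventually_sequentially by blast
  have sc: "summable (\<lambda>n. norm (c n))"
  proof (rule summable_comparison_test'[of "\<lambda>n. (norm (G * A * z) + 1) * q ^ n" N])
    show "summable (\<lambda>n. (norm (G * A * z) + 1) * q ^ n)"
      using q by (intro summable_mult summable_geometric) simp
    fix n assume "n \<ge> N"
    have "norm (norm (c n)) = q ^ n * norm (h n)"
      using q unfolding ch by (simp add: norm_mult norm_power Q_def)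
    also have "\<dots> \<le> q ^ n * (norm (G * A * z) + 1)"
      using N[OF \<open>n \<ge> N\<close>] q by (intro mult_left_mono) auto
    finally show "norm (norm (c n)) \<le> (norm (G * A * z) + 1) * q ^ n" by (simp add: ac_simps)
  qed
  have okx: "okx x"
  proof -
    have "summable (\<lambda>k. norm (x (Suc k) * x (Suc k + 1)))" using sc by (simp add: c_def)
    then show ?thesis by (subst summable_Suc_iff[symmetric]) simp
  qed
  have c0: "c \<longlonglongrightarrow> 0" by (rule summable_LIMSEQ_zero[OF summable_norm_cancel[OF sc]])
  define u where "u n = frakF (\<lambda>k. x (k + n))" for n
  define v where "v n = Rf A z q (b n)" for n
  have ru: "u n = u (Suc n) - c n * u (Suc (Suc n))" for n
  proof -
    have "frakF (\<lambda>k. x (k + n)) = frakF (\<lambda>k. x (k + 1 + n)) - x (1 + n) * x (2 + n) * frakF (\<lambda>k. x (k + 2 + n))"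
      using frakF_rec[OF okx_shift[OF okx, of n]] by simp
    then show ?thesis unfolding u_def c_def by (simp add: ac_simps)
  qed
  have rv: "v n = v (Suc n) - c n * v (Suc (Suc n))" for n
  proof -
    have "Rf A z q (b n) = Rf A z q (b n * Q) - (b n * (A - b n * Q) * z / ((1 - (1-z) * b n) * (1 - (1-z) * (b n * Q)))) * Rf A z q (b n * Q * Q)"
      using R_rec[OF q, of "b n" z A] nzb D D' unfolding Q_def by simp
    then show ?thesis unfolding v_def cf bS by simp
  qed
  have u1: "u \<longlonglongrightarrow> 1" unfolding u_def[abs_def] by (rule frakF_tendsto[OF okx])
  have v1: "v \<longlonglongrightarrow> 1" unfolding v_def[abs_def] by (rule Rf_lim[OF q b0])
  have "u 0 = v 0" by (rule rec_unique[OF ru rv c0 u1 v1])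
  then show ?thesis unfolding u_def v_def Rf_def b_def x_def G_def A_def by simp
qed

end
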